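(* Every $x\in\mathscr X$ admits the continuous quadratic variation $\langle x\rangle_t=t$, $t\in[0,1]$, along the sequence of dyadic partitions $\mathbb T_n=\{k2^{-n}: k=0,\dots,2^n\}$, $n\ge1$.
   Context: The Faber--Schauder functions are $e_{0,0}(t):=(\min\{t,1-t\})^+$ and $e_{m,k}(t):=2^{-m/2}e_{0,0}(2^m t-k)$ for $t\in\mathbb R$, $m\ge1$, $k\in\mathbb Z$. $\mathscr X$ denotes the set of all functions $x\in C[0,1]$ of the form $x=\sum_{m=0}^\infty\sum_{k=0}^{2^m-1}\theta_{m,k}e_{m,k}$ (uniformly convergent series) with $\theta_{m,k}\in\{-1,+1\}$. For a partition $\mathbb T$ of $[0,1]$ and $t\in\mathbb T$, the successor $t'$ is $\min\{u\in\mathbb T:u>t\}$ if $t<1$ and $t'=1$ if $t=1$. For $x\in C[0,1]$ set $\langle x\rangle^n_t:=\sum_{s\in\mathbb T_n,\,s\le t}(x(s')-x(s))^2$. The function $x$ admits the continuous quadratic variation $\langle x\rangle$ along $(\mathbb T_n)$ if $\langle x\rangle_t:=\lim_{n\to\infty}\langle x\rangle^n_t$ exists for all $t\in[0,1]$ and $t\mapsto\langle x\rangle_t$ is continuous. *)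

theory Defs
  imports "HOL-Analysis.Analysis"
begin

definition fs00 :: "real \<Rightarrow> real" where
  "fs00 t = max 0 (min t (1 - t))"

definition fs :: "nat \<Rightarrow> int \<Rightarrow> real \<Rightarrow> real" where
  "fs m k t = (if m = 0 then fs00 t else 2 powr (- real m / 2) * fs00 (2 ^ m * t - real_of_int k))"

definition scrX :: "(real \<Rightarrow> real) set" where
  "scrX = {x. continuous_on {0..1} x \<and>
     (\<exists>\<theta> :: nat \<Rightarrow> int \<Rightarrow> real. (\<forall>m k. \<theta> m k \<in> {-1, 1}) \<and>
        uniform_limit {0..1}
          (\<lambda>N t. \<Sum>m<N. \<Sum>k\<in>{0..<2^m}. \<theta> m (int k) * fs m (int k) t) x sequentially)}"

definition succ_pt :: "real set \<Rightarrow> real \<Rightarrow> real" where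
  "succ_pt T t = (if t < 1 then Min {u \<in> T. u > t} else 1)"

definition qv_n :: "real set \<Rightarrow> (real \<Rightarrow> real) \<Rightarrow> real \<Rightarrow> real" where
  "qv_n T x t = (\<Sum>s\<in>{s \<in> T. s \<le> t}. (x (succ_pt T s) - x s)^2)"

definition admits_cqv :: "(nat \<Rightarrow> real set) \<Rightarrow> (real \<Rightarrow> real) \<Rightarrow> bool" where
  "admits_cqv Ts x \<longleftrightarrow> (\<forall>t\<in>{0..1}. convergent (\<lambda>n. qv_n (Ts n) x t)) \<and>
     continuous_on {0..1} (\<lambda>t. lim (\<lambda>n. qv_n (Ts n) x t))"

definition dyadic :: "nat \<Rightarrow> real set" where
  "dyadic n = {real k / 2 ^ n | k. k \<le> 2 ^ n}"

end

theory Submission imports Defs "HOL-Real_Asymp.Real_Asymp" begin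


lemma sum_even_odd: "(\<Sum>j<2*I. f j) = (\<Sum>i<I. f (2*i) + f (2*i+1)) " for f :: "nat \<Rightarrow> real"
  by (induction I) (simp_all add: algebra_simps)

lemma sq_ineq: "(a + b)^2 \<le> 4/3 * a^2 + 4 * b^2" for a b :: real
proof -
  have "0 \<le> (a - 3*b)^2" by simp
  thus ?thesis by (simp add: power2_eq_square algebra_simps)
qed

context
  fixes v :: "nat \<Rightarrow> nat \<Rightarrow> real" and \<theta> :: "nat \<Rightarrow> nat \<Rightarrow> real" and r :: "nat \<Rightarrow> real"
  assumes A: "\<And>n i. i \<le> 2^n \<Longrightarrow> v (Suc n) (2*i) = v n i"
  and B: "\<And>n i. i < 2^n \<Longrightarrow> v (Suc n) (2*i+1) = (v n i + v n (i+1))/2 + \<theta> n i * r n / 2"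
  and C: "v 0 0 = v 0 1"
  and T: "\<And>n i. \<theta> n i \<in> {-1,1}"
  and R: "\<And>n. r n ^2 = 1/2^n"
begin

lemma pair_vals:
  assumes il: "i < 2^n"
  shows "v (Suc n) (Suc (2*i)) - v (Suc n) (2*i) = (v n (Suc i) - v n i)/2 + \<theta> n i * r n / 2"
    and "v (Suc n) (Suc (2*i+1)) - v (Suc n) (2*i+1) = (v n (Suc i) - v n i)/2 - \<theta> n i * r n / 2"
proof -
  show "v (Suc n) (Suc (2*i)) - v (Suc n) (2*i) = (v n (Suc i) - v n i)/2 + \<theta> n i * r n / 2"
    using A[of i n] B[OF il] il by (simp add: field_simps)
  have "Suc (2*i+1) = 2*(i+1)" by simp
  then show "v (Suc n) (Suc (2*i+1)) - v (Suc n) (2*i+1) = (v n (Suc i) - v n i)/2 - \<theta> n i * r n / 2"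
    using A[of "i+1" n] B[OF il] il by (simp add: field_simps)
qed

lemma th2: "\<theta> n i ^2 = 1" using T[of n i] by auto

lemma rr: "(\<theta> n i * r n)^2 = 1/2^n" using th2 R by (simp add: power_mult_distrib)

lemma abstract_D:
  shows "j < 2^n \<Longrightarrow> (v n (Suc j) - v n j)^2 \<le> 6/2^n"
proof (induction n arbitrary: j)
  case 0
  then show ?case using C by simp
next
  case (Suc n)
  obtain i where ji: "j = 2*i \<or> j = 2*i+1" by (metis dvd_mult_div_cancel odd_two_times_div_two_succ)
  have il: "i < 2^n" using ji Suc.prems by auto
  have IH: "(v n (Suc i) - v n i)^2 \<le> 6/2^n" using Suc.IH il .
  define D where "D = v n (Suc i) - v n i"
  have "(v (Suc n) (Suc j) - v (Suc n) j) = D/2 + \<theta> n i * r n / 2 \<or>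
        (v (Suc n) (Suc j) - v (Suc n) j) = D/2 + (- (\<theta> n i * r n) / 2)"
    using pair_vals[OF il] ji unfolding D_def by auto
  moreover have "(D/2 + s/2)^2 \<le> 6 / 2^Suc n" if "s^2 = 1/2^n" for s
  proof -
    have "(D/2 + s/2)^2 \<le> 4/3 * (D/2)^2 + 4 * (s/2)^2" by (rule sq_ineq)
    also have "\<dots> = D^2/3 + s^2" by (simp add: power_divide)
    also have "\<dots> \<le> 2/2^n + 1/2^n" using IH that unfolding D_def by simp
    also have "\<dots> = 6/2^Suc n" by simp
    finally show ?thesis .
  qed
  ultimately show ?case using rr by (metis add_divide_distrib power2_minus)
qed

lemma pair_sum:
  assumes il: "i < 2^n"
  shows "(v (Suc n) (Suc (2*i)) - v (Suc n) (2*i))^2 + (v (Suc n) (Suc (2*i+1)) - v (Suc n) (2*i+1))^2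
     = (v n (Suc i) - v n i)^2/2 + 1/2^(Suc n)"
proof -
  define D where "D = v n (Suc i) - v n i"
  define s where "s = \<theta> n i * r n"
  have s2: "s^2 = 1/2^n" unfolding s_def by (rule rr)
  have "(D/2 + s/2)^2 + (D/2 - s/2)^2 = D^2/2 + s^2/2" by (simp add: power2_eq_square field_simps)
  then show ?thesis using pair_vals[OF il] s2 unfolding D_def s_def by simp
qed

lemma Q_even:
  assumes "I \<le> 2^n"
  shows "(\<Sum>j<2*I. (v (Suc n) (Suc j) - v (Suc n) j)^2) = (\<Sum>j<I. (v n (Suc j) - v n j)^2)/2 + I/2^Suc n"
proof -
  have "(\<Sum>j<2*I. (v (Suc n) (Suc j) - v (Suc n) j)^2) =
     (\<Sum>i<I. (v n (Suc i) - v n i)^2/2 + 1/2^(Suc n))"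
    unfolding sum_even_odd using assms by (intro sum.cong refl pair_sum) auto
  also have "\<dots> = (\<Sum>j<I. (v n (Suc j) - v n j)^2)/2 + I/2^Suc n"
    by (simp add: sum.distrib sum_divide_distrib)
  finally show ?thesis .
qed

lemma abstract_E:
  shows "J \<le> 2^n \<Longrightarrow> \<bar>2^n * (\<Sum>j<J. (v n (Suc j) - v n j)^2) - J\<bar> \<le> 1 + 6*n"
proof (induction n arbitrary: J)
  case 0
  then have "J = 0 \<or> J = 1" by auto
  then show ?case using C by auto
next
  case (Suc n)
  obtain I where ji: "J = 2*I \<or> J = 2*I+1" by (metis dvd_mult_div_cancel odd_two_times_div_two_succ)
  have il: "I \<le> 2^n" using ji Suc.prems by auto
  have IH: "\<bar>2^n * (\<Sum>j<I. (v n (Suc j) - v n j)^2) - I\<bar> \<le> 1 + 6*n" using Suc.IH il .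
  have ev: "2^Suc n * (\<Sum>j<2*I. (v (Suc n) (Suc j) - v (Suc n) j)^2) - real (2*I)
      = 2^n * (\<Sum>j<I. (v n (Suc j) - v n j)^2) - I"
    using Q_even[OF il] by (simp add: field_simps)
  show ?case
  proof (cases "J = 2*I")
    case True
    then show ?thesis using ev IH by simp
  next
    case False
    then have J: "J = 2*I+1" using ji by auto
    then have il2: "2*I < 2^Suc n" using Suc.prems by simp
    have d: "(v (Suc n) (Suc (2*I)) - v (Suc n) (2*I))^2 \<le> 6/2^Suc n"
      using abstract_D[OF il2] .
    have d': "2^Suc n * (v (Suc n) (Suc (2*I)) - v (Suc n) (2*I))^2 \<le> 6"
      using d by (simp add: field_simps)
    have d0: "0 \<le> 2^Suc n * (v (Suc n) (Suc (2*I)) - v (Suc n) (2*I))^2" by simp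
    have "2^Suc n * (\<Sum>j<J. (v (Suc n) (Suc j) - v (Suc n) j)^2) - real J =
       (2^Suc n * (\<Sum>j<2*I. (v (Suc n) (Suc j) - v (Suc n) j)^2) - real (2*I))
        + 2^Suc n * (v (Suc n) (Suc (2*I)) - v (Suc n) (2*I))^2 - 1"
      using J by (simp add: algebra_simps)
    also have "\<dots> = (2^n * (\<Sum>j<I. (v n (Suc j) - v n j)^2) - I)
        + 2^Suc n * (v (Suc n) (Suc (2*I)) - v (Suc n) (2*I))^2 - 1" using ev by simp
    moreover have "real (1 + 6 * Suc n) = real (1+6*n) + 6" by simp
    ultimately show ?thesis using IH d' d0 by (simp only:)
  qed
qed

end



lemma fs00_neg: "y \<le> 0 \<Longrightarrow> fs00 y = 0" by (simp add: fs00_def)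
lemma fs00_big: "y \<ge> 1 \<Longrightarrow> fs00 y = 0" by (simp add: fs00_def)
lemma fs00_left: "0 \<le> y \<Longrightarrow> y \<le> 1/2 \<Longrightarrow> fs00 y = y" by (simp add: fs00_def)
lemma fs00_right: "1/2 \<le> y \<Longrightarrow> y \<le> 1 \<Longrightarrow> fs00 y = 1 - y" by (simp add: fs00_def)

lemma fs00_int: "fs00 (real_of_int c) = 0"
proof (cases "c \<le> 0")
  case True then show ?thesis by (intro fs00_neg) simp
next
  case False then show ?thesis by (intro fs00_big) simp
qed

lemma lin_aux: "fa = 1 - a \<Longrightarrow> fb = 1 - b \<Longrightarrow> fm = 1 - (a+b)/2 \<Longrightarrow> fm = (fa+fb)/2" for fa fb fm a b :: real
  by (simp add: field_simps)

lemma fs00_mid: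
  fixes c :: int
  assumes "p \<ge> 1"
  shows "fs00 ((2*real_of_int c+1)/2^(p+1)) = (fs00 (real_of_int c/2^p) + fs00 ((real_of_int c+1)/2^p))/2"
proof -
  obtain q where q: "p = Suc q" using assms by (cases p) auto
  define h :: real where "h = 2^p"
  have hp: "h > 0" unfolding h_def by simp
  have h2: "(2::real)^(p+1) = 2*h" unfolding h_def by simp
  have hq: "h = 2 * 2^q" unfolding h_def q by simp
  define Q :: int where "Q = 2^q"
  have hQ: "h = 2 * real_of_int Q" unfolding Q_def hq by simp
  have mid: "(2*real_of_int c+1)/2^(p+1) = ((real_of_int c/h) + ((real_of_int c+1)/h))/2" unfolding h2 using hp by (simp add: field_simps)
  have cases: "c + 1 \<le> 0 \<or> c \<ge> 2*Q \<or> (0 \<le> c \<and> c+1 \<le> Q) \<or> (Q \<le> c \<and> c+1 \<le> 2*Q)" by linarith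
  let ?a = "real_of_int c / h" and ?b = "(real_of_int c + 1)/h"
  have "fs00 ((?a + ?b)/2) = (fs00 ?a + fs00 ?b)/2"
  proof -
    { assume "c + 1 \<le> 0"
      then have "?b \<le> 0" "?a \<le> 0" "(?a + ?b)/2 \<le> 0" using hp by (auto simp: field_simps)
      then have ?thesis by (simp add: fs00_neg) }
    moreover
    { assume "c \<ge> 2*Q"
      then have "real_of_int c \<ge> h" using hQ by simp
      then have "?b \<ge> 1" "?a \<ge> 1" "(?a + ?b)/2 \<ge> 1" using hp by (auto simp: field_simps)
      then have ?thesis by (simp add: fs00_big) }
    moreover
    { assume a: "0 \<le> c \<and> c+1 \<le> Q"
      then have "real_of_int c + 1 \<le> h/2" using hQ by simp
      then have "0 \<le> ?a" "?b \<le> 1/2" "?a \<le> ?b" using hp a by (auto simp: field_simps)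
      note f = this
      have "fs00 ?a = ?a" by (rule fs00_left) (use f in linarith)+
      moreover have "fs00 ?b = ?b" by (rule fs00_left) (use f in linarith)+
      moreover have "fs00 ((?a + ?b)/2) = (?a + ?b)/2" using f hp by (intro fs00_left) (simp_all add: field_simps)
      ultimately have ?thesis by simp }
    moreover
    { assume a: "Q \<le> c \<and> c+1 \<le> 2*Q"
      then have "real_of_int c \<ge> h/2" "real_of_int c + 1 \<le> h" using hQ by simp_all
      then have "1/2 \<le> ?a" "?b \<le> 1" "?a \<le> ?b" using hp a by (auto simp: field_simps)
      note f = this
      have "fs00 ?a = 1 - ?a" by (rule fs00_right) (use f in linarith)+
      moreover have "fs00 ?b = 1 - ?b" by (rule fs00_right) (use f in linarith)+
      moreover have "fs00 ((?a + ?b)/2) = 1 - (?a + ?b)/2" using f hp by (intro fs00_right) (simp_all add: field_simps)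
      ultimately have ?thesis by (rule lin_aux) }
    ultimately show ?thesis using cases by blast
  qed
  then show ?thesis unfolding mid h_def by simp
qed

lemma fs_eq: "m > 0 \<or> k = 0 \<Longrightarrow> fs m k t = 2 powr (- real m / 2) * fs00 (2^m * t - real_of_int k)"
  by (auto simp: fs_def)

lemma fs_vanish:
  fixes j :: nat and k :: int
  assumes "n \<le> m"
  shows "fs m k (real j / 2^n) = 0"
proof -
  have "2^m * (real j / 2^n) - real_of_int k = real_of_int (2^(m-n) * int j - k)"
  proof -
    have "(2::real)^m = 2^(m-n) * 2^n" using assms by (simp add: power_add[symmetric])
    then show ?thesis by simp
  qed
  moreover have "real j / 2^n = real_of_int (int j)" if "m = 0"
    using that assms by simp
  ultimately show ?thesis unfolding fs_def using fs00_int by (metis mult_zero_right)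
qed

lemma fs_mid:
  fixes i :: nat and k :: int
  assumes "m < n" "m > 0 \<or> k = 0"
  shows "fs m k ((2*real i+1)/2^(n+1)) = (fs m k (real i/2^n) + fs m k ((real i + 1)/2^n))/2"
proof -
  define p where "p = n - m"
  have p1: "p \<ge> 1" using assms p_def by simp
  have n: "n = m + p" using assms p_def by simp
  define c :: int where "c = int i - k * 2^p"
  have e1: "2^m * ((2*real i+1)/2^(n+1)) - real_of_int k = (2*real_of_int c+1)/2^(p+1)"
    unfolding n c_def by (simp add: power_add field_simps)
  have e2: "2^m * (real i/2^n) - real_of_int k = real_of_int c/2^p"
    unfolding n c_def by (simp add: power_add field_simps)
  have e3: "2^m * ((real i + 1)/2^n) - real_of_int k = (real_of_int c + 1)/2^p"
    unfolding n c_def by (simp add: power_add field_simps)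
  show ?thesis unfolding fs_eq[OF assms(2)] e1 e2 e3 fs00_mid[OF p1] by (simp add: algebra_simps)
qed

lemma fs_level:
  fixes i k :: nat
  assumes "k < 2^n" "i < 2^n"
  shows "fs n (int k) ((2*real i+1)/2^(n+1)) = (if k = i then 2 powr (- real n / 2) / 2 else 0)"
proof (cases "n = 0")
  case True
  then show ?thesis using assms by (simp add: fs_def fs00_def)
next
  case False
  have e: "2^n * ((2*real i+1)/2^(n+1)) - real_of_int (int k) = real_of_int (int i - int k) + 1/2"
    by (simp add: field_simps)
  have "fs00 (real_of_int (int i - int k) + 1/2) = (if k = i then 1/2 else 0)"
  proof (cases "k = i")
    case True then show ?thesis by (simp add: fs00_def)
  next
    case ne: False
    then have "int i - int k \<ge> 1 \<or> int i - int k \<le> -1" by linarith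
    then show ?thesis
    proof
      assume "int i - int k \<ge> 1"
      then have "real_of_int (int i - int k) \<ge> 1" by linarith
      then show ?thesis using ne by (subst fs00_big) auto
    next
      assume "int i - int k \<le> -1"
      then have "real_of_int (int i - int k) \<le> -1" by linarith
      then show ?thesis using ne by (subst fs00_neg) auto
    qed
  qed
  note H = this
  have F: "fs n (int k) t = 2 powr (- real n / 2) * fs00 (2^n * t - real_of_int (int k))" for t
    using False by (simp add: fs_def)
  show ?thesis unfolding F e using H by auto
qed



definition PS :: "(nat \<Rightarrow> int \<Rightarrow> real) \<Rightarrow> nat \<Rightarrow> real \<Rightarrow> real" where
  "PS \<theta> N t = (\<Sum>m<N. \<Sum>k\<in>{0..<2^m}. \<theta> m (int k) * fs m (int k) t)"

lemma PS_stable: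
  assumes "n \<le> N"
  shows "PS \<theta> N (real j / 2^n) = PS \<theta> n (real j / 2^n)"
  using assms
proof (induction N rule: dec_induct)
  case base
  then show ?case by simp
next
  case (step N)
  then show ?case by (simp add: PS_def fs_vanish)
qed

lemma PS_mid:
  "PS \<theta> n ((2*real i+1)/2^(n+1)) = (PS \<theta> n (real i/2^n) + PS \<theta> n ((real i + 1)/2^n))/2"
proof -
  have "PS \<theta> n ((2*real i+1)/2^(n+1)) = (\<Sum>m<n. \<Sum>k\<in>{0..<2^m}. \<theta> m (int k) *
      ((fs m (int k) (real i/2^n) + fs m (int k) ((real i + 1)/2^n))/2))"
    unfolding PS_def
  proof (intro sum.cong refl)
    fix m k assume m: "m \<in> {..<n}" and k: "k \<in> {0..<(2::nat)^m}"
    have "m > 0 \<or> int k = 0" using k by (cases "m = 0") auto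
    then show "\<theta> m (int k) * fs m (int k) ((2*real i+1)/2^(n+1)) =
      \<theta> m (int k) * ((fs m (int k) (real i/2^n) + fs m (int k) ((real i + 1)/2^n))/2)"
      using m by (subst fs_mid) auto
  qed
  also have "\<dots> = (\<Sum>m<n. \<Sum>k\<in>{0..<2^m}. \<theta> m (int k) * fs m (int k) (real i/2^n) / 2
       + \<theta> m (int k) * fs m (int k) ((real i + 1)/2^n) / 2)"
    by (intro sum.cong refl) (simp add: field_simps)
  also have "\<dots> = (PS \<theta> n (real i/2^n) + PS \<theta> n ((real i + 1)/2^n))/2"
    by (simp only: PS_def sum.distrib sum_divide_distrib[symmetric] add_divide_distrib)
  finally show ?thesis .
qed

lemma PS_level:
  assumes "i < 2^n"
  shows "PS \<theta> (Suc n) ((2*real i+1)/2^(n+1)) = PS \<theta> n ((2*real i+1)/2^(n+1)) + \<theta> n (int i) * 2 powr (- real n / 2) / 2"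
proof -
  have "(\<Sum>k\<in>{0..<2^n}. \<theta> n (int k) * fs n (int k) ((2*real i+1)/2^(n+1)))
      = (\<Sum>k\<in>{0..<2^n}. if k = i then \<theta> n (int i) * 2 powr (- real n / 2) / 2 else 0)"
  proof (intro sum.cong refl)
    fix k assume "k \<in> {0..<(2::nat)^n}"
    then have k: "k < 2^n" by simp
    show "\<theta> n (int k) * fs n (int k) ((2*real i+1)/2^(n+1)) = (if k = i then \<theta> n (int i) * 2 powr (- real n / 2) / 2 else 0)"
      by (simp only: fs_level[OF k assms]) simp
  qed
  also have "\<dots> = \<theta> n (int i) * 2 powr (- real n / 2) / 2" using assms by simp
  finally show ?thesis by (simp add: PS_def)
qed

lemma r_sq: "(2 powr (- real n / 2))^2 = 1 / 2^n"
proof -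
  have "(2 powr (- real n / 2))^2 = 2 powr (- real n / 2) * 2 powr (- real n / 2)" by (simp add: power2_eq_square)
  also have "\<dots> = 2 powr (- real n)" by (simp add: powr_add[symmetric])
  also have "\<dots> = 1 / 2^n" by (simp add: powr_minus powr_realpow divide_inverse)
  finally show ?thesis .
qed



lemma dyadic_finite: "finite (dyadic n)"
proof -
  have "dyadic n = (\<lambda>k. real k / 2^n) ` {..2^n}" unfolding dyadic_def by auto
  then show ?thesis by simp
qed

lemma succ_dyadic:
  assumes "j < 2^n"
  shows "succ_pt (dyadic n) (real j / 2^n) = real (Suc j) / 2^n"
proof -
  have lt: "real j / 2^n < 1" using assms by (simp add: field_simps)
  have "Min {u \<in> dyadic n. u > real j / 2^n} = real (Suc j) / 2^n"
  proof (rule Min_eqI)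
    show "finite {u \<in> dyadic n. u > real j / 2^n}" using dyadic_finite by simp
    have "real (Suc j) / 2^n \<in> dyadic n"
      unfolding dyadic_def using Suc_leI[OF assms] by blast
    then show "real (Suc j) / 2^n \<in> {u \<in> dyadic n. u > real j / 2^n}"
      by (simp add: divide_strict_right_mono)
  next
    fix y assume "y \<in> {u \<in> dyadic n. u > real j / 2^n}"
    then obtain k where y: "y = real k / 2^n" and "real k / 2^n > real j / 2^n"
      unfolding dyadic_def by auto
    then have "k > j" by (simp add: divide_strict_right_mono_neg field_simps)
    then have "real (Suc j) \<le> real k" by simp
    then show "real (Suc j) / 2^n \<le> y" unfolding y by (simp add: divide_right_mono)
  qed
  then show ?thesis using lt unfolding succ_pt_def by simp
qed

lemma dyadic_le_set:
  assumes "0 \<le> t" "t \<le> 1"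
  shows "{s \<in> dyadic n. s \<le> t} = (\<lambda>j. real j / 2^n) ` {..<nat \<lfloor>t * 2^n\<rfloor> + 1}"
proof -
  have iff: "real j / 2^n \<le> t \<longleftrightarrow> j < nat \<lfloor>t * 2^n\<rfloor> + 1" for j :: nat
  proof -
    have "real j / 2^n \<le> t \<longleftrightarrow> real j \<le> t * 2^n" by (simp add: field_simps)
    also have "\<dots> \<longleftrightarrow> int j \<le> \<lfloor>t * 2^n\<rfloor>" by (metis le_floor_iff of_int_of_nat_eq)
    also have "\<dots> \<longleftrightarrow> j < nat \<lfloor>t * 2^n\<rfloor> + 1"
    proof -
      have F0: "0 \<le> \<lfloor>t * 2^n\<rfloor>" using assms by simp
      then have "int (nat \<lfloor>t * 2^n\<rfloor>) = \<lfloor>t * 2^n\<rfloor>" by simp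
      then show ?thesis by linarith
    qed
    finally show ?thesis .
  qed
  have bound: "j < nat \<lfloor>t * 2^n\<rfloor> + 1 \<Longrightarrow> j \<le> 2^n" for j :: nat
  proof -
    assume "j < nat \<lfloor>t * 2^n\<rfloor> + 1"
    then have "real j \<le> t * 2^n" using iff[of j] by (simp add: field_simps)
    also have "\<dots> \<le> 2^n" using assms by simp
    finally show "j \<le> 2^n" by (simp del: of_nat_power add: of_nat_power[symmetric])
  qed
  show ?thesis unfolding dyadic_def using iff bound by auto
qed

lemma qv_dyadic:
  assumes "0 \<le> t" "t \<le> 1"
  shows "qv_n (dyadic n) x t = (\<Sum>j<min (nat \<lfloor>t * 2^n\<rfloor> + 1) (2^n). (x (real (Suc j)/2^n) - x (real j/2^n))^2)"
proof -
  define K where "K = nat \<lfloor>t * 2^n\<rfloor> + 1"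
  have inj: "inj_on (\<lambda>j::nat. real j / 2^n) {..<K}" by (auto simp: inj_on_def)
  have "qv_n (dyadic n) x t = (\<Sum>j<K. (x (succ_pt (dyadic n) (real j / 2^n)) - x (real j / 2^n))^2)"
    unfolding qv_n_def dyadic_le_set[OF assms, of n, folded K_def] by (simp add: sum.reindex[OF inj])
  have Kle: "K \<le> 2^n + 1"
  proof -
    have "t * 2^n \<le> 2^n" using assms by simp
    then have "\<lfloor>t * 2^n\<rfloor> \<le> 2^n" by (metis floor_le_numeral floor_mono floor_of_nat of_nat_numeral of_nat_power) 
    then have "nat \<lfloor>t * 2^n\<rfloor> \<le> 2^n" by (simp add: nat_le_iff)
    then show ?thesis unfolding K_def by linarith
  qed
  have g: "j \<le> 2^n \<Longrightarrow> (x (succ_pt (dyadic n) (real j / 2^n)) - x (real j / 2^n))^2 =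
     (if j < 2^n then (x (real (Suc j)/2^n) - x (real j/2^n))^2 else 0)" for j
    using succ_dyadic[of j n] by (auto simp: succ_pt_def)
  have "qv_n (dyadic n) x t = (\<Sum>j<K. (if j < 2^n then (x (real (Suc j)/2^n) - x (real j/2^n))^2 else 0))"
    unfolding \<open>qv_n (dyadic n) x t = _\<close> using Kle by (intro sum.cong refl g) auto
  also have "\<dots> = (\<Sum>j<min K (2^n). (x (real (Suc j)/2^n) - x (real j/2^n))^2)"
  proof (cases "K \<le> 2^n")
    case True
    then show ?thesis by (intro sum.cong) auto
  next
    case False
    then have K: "K = Suc (2^n)" using Kle by simp
    show ?thesis unfolding K by (simp add: min_def)
  qed
  finally show ?thesis unfolding K_def .
qed



lemma K_bounds:
  assumes "0 \<le> t" "t \<le> 1"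
  shows "t * 2^n \<le> real (min (nat \<lfloor>t * 2^n\<rfloor> + 1) (2^n))"
    and "real (min (nat \<lfloor>t * 2^n\<rfloor> + 1) (2^n)) \<le> t * 2^n + 1"
proof -
  have F0: "0 \<le> \<lfloor>t * 2^n\<rfloor>" using assms by simp
  have e: "real (nat \<lfloor>t * 2^n\<rfloor> + 1) = real_of_int \<lfloor>t * 2^n\<rfloor> + 1" using F0 by simp
  have f1: "t * 2^n < real_of_int \<lfloor>t * 2^n\<rfloor> + 1" by linarith
  have f2: "real_of_int \<lfloor>t * 2^n\<rfloor> \<le> t * 2^n" by linarith
  have t2: "t * 2^n \<le> 2^n" using assms by simp
  have m: "real (min (nat \<lfloor>t * 2^n\<rfloor> + 1) (2^n)) = real (nat \<lfloor>t * 2^n\<rfloor> + 1) \<or>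
         real (min (nat \<lfloor>t * 2^n\<rfloor> + 1) (2^n)) = 2^n \<and> 2^n \<le> real (nat \<lfloor>t * 2^n\<rfloor> + 1)"
  proof -
    have g: "real (min a b) = real a \<or> (real (min a b) = real b \<and> real b \<le> real a)" for a b :: nat
      by (auto simp: min_def)
    have p: "real ((2::nat)^n) = 2^n" by simp
    show ?thesis using g[of "nat \<lfloor>t * 2^n\<rfloor> + 1" "2^n"] unfolding p .
  qed
  show "t * 2^n \<le> real (min (nat \<lfloor>t * 2^n\<rfloor> + 1) (2^n))"
    using m e f1 t2 by linarith
  show "real (min (nat \<lfloor>t * 2^n\<rfloor> + 1) (2^n)) \<le> t * 2^n + 1"
    using m e f2 by linarith
qed

theorem proposition2p6:
  assumes "x \<in> scrX"
  shows "admits_cqv (\<lambda>n. dyadic (Suc n)) x \<and>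
         (\<forall>t\<in>{0..1}. (\<lambda>n. qv_n (dyadic (Suc n)) x t) \<longlonglongrightarrow> t)"
proof -
  from assms obtain \<theta> where th: "\<forall>m k. \<theta> m k \<in> {-1, 1}"
    and ul: "uniform_limit {0..1} (\<lambda>N t. \<Sum>m<N. \<Sum>k\<in>{0..<2^m}. \<theta> m (int k) * fs m (int k) t) x sequentially"
    unfolding scrX_def by blast
  have eqPS: "(\<lambda>N t. \<Sum>m<N. \<Sum>k\<in>{0..<2^m}. \<theta> m (int k) * fs m (int k) t) = PS \<theta>"
    by (auto simp: PS_def fun_eq_iff)
  have ul': "uniform_limit {0..1} (PS \<theta>) x sequentially" using ul unfolding eqPS .
  have xd: "x (real j / 2^n) = PS \<theta> n (real j / 2^n)" if "j \<le> 2^n" for j n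
  proof -
    have "real j / 2^n \<in> {0..1}" using that by (simp add: field_simps)
    then have l1: "(\<lambda>N. PS \<theta> N (real j / 2^n)) \<longlonglongrightarrow> x (real j / 2^n)"
      by (rule tendsto_uniform_limitI[OF ul'])
    have "eventually (\<lambda>N. PS \<theta> N (real j / 2^n) = PS \<theta> n (real j / 2^n)) sequentially"
      unfolding eventually_sequentially using PS_stable by blast
    then have l2: "(\<lambda>N. PS \<theta> N (real j / 2^n)) \<longlonglongrightarrow> PS \<theta> n (real j / 2^n)"
      by (rule tendsto_eventually)
    show ?thesis using LIMSEQ_unique[OF l1 l2] .
  qed
  define v where "v n j = x (real j / 2^n)" for n j :: nat
  define \<theta>' where "\<theta>' n i = \<theta> n (int i)" for n i :: nat
  define r where "r n = 2 powr (- real n / 2)" for n :: nat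
  have A: "\<And>n i. i \<le> 2^n \<Longrightarrow> v (Suc n) (2*i) = v n i"
    unfolding v_def by simp
  have B: "v (Suc n) (2*i+1) = (v n i + v n (i+1))/2 + \<theta>' n i * r n / 2" if il: "i < 2^n" for n i
  proof -
    have a: "real (2*i+1) / 2^Suc n = (2*real i+1)/2^(n+1)" by simp
    have le: "2*i+1 \<le> 2^Suc n" using il by simp
    have "v (Suc n) (2*i+1) = PS \<theta> (Suc n) (real (2*i+1) / 2^Suc n)"
      unfolding v_def by (rule xd[OF le])
    also have "\<dots> = PS \<theta> (Suc n) ((2*real i+1)/2^(n+1))" unfolding a ..
    also have "\<dots> = (PS \<theta> n (real i/2^n) + PS \<theta> n ((real i + 1)/2^n))/2 + \<theta>' n i * r n / 2"
      unfolding PS_level[OF il] PS_mid \<theta>'_def r_def ..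
    also have "PS \<theta> n (real i/2^n) = v n i" unfolding v_def using xd[of i n] il by simp
    also have "PS \<theta> n ((real i + 1)/2^n) = v n (i+1)" unfolding v_def using xd[of "i+1" n] il by (simp add: add.commute)
    finally show ?thesis .
  qed
  have C: "v 0 0 = v 0 1"
    unfolding v_def using xd[of 0 0] xd[of 1 0] by (simp add: PS_def)
  have T: "\<And>n i. \<theta>' n i \<in> {-1,1}" unfolding \<theta>'_def using th by blast
  have R: "\<And>n. r n ^2 = 1/2^n" unfolding r_def by (rule r_sq)
  have E: "J \<le> 2^n \<Longrightarrow> \<bar>2^n * (\<Sum>j<J. (v n (Suc j) - v n j)^2) - J\<bar> \<le> 1 + 6*n" for J n
    using abstract_E[of v \<theta>' r, OF A B C T R] by blast
  have bound: "\<bar>qv_n (dyadic n) x t - t\<bar> \<le> (2 + 6*n) / 2^n" if t: "0 \<le> t" "t \<le> 1" for t n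
  proof -
    define K where "K = min (nat \<lfloor>t * 2^n\<rfloor> + 1) (2^n)"
    define Q where "Q = (\<Sum>j<K. (v n (Suc j) - v n j)^2)"
    have q: "qv_n (dyadic n) x t = Q" unfolding Q_def K_def v_def qv_dyadic[OF t] ..
    have EK: "\<bar>2^n * Q - K\<bar> \<le> 1 + 6*n" unfolding Q_def using E[of K n] by (simp add: K_def)
    have k1: "t * 2^n \<le> real K" and k2: "real K \<le> t * 2^n + 1"
      unfolding K_def using K_bounds[OF t] by auto
    have "\<bar>2^n * Q - 2^n * t\<bar> \<le> 2 + 6*n" using EK k1 k2 by (simp add: abs_le_iff algebra_simps) linarith?
    then have "2^n * \<bar>Q - t\<bar> \<le> 2 + 6*n" by (simp add: abs_mult right_diff_distrib[symmetric])
    then show ?thesis unfolding q by (simp add: field_simps)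
  qed
  have lim0: "(\<lambda>n. (2 + 6 * real n) / 2^n) \<longlonglongrightarrow> 0" by real_asymp
  have conv: "(\<lambda>n. qv_n (dyadic n) x t) \<longlonglongrightarrow> t" if t: "t \<in> {0..1}" for t
  proof -
    have "(\<lambda>n. qv_n (dyadic n) x t - t) \<longlonglongrightarrow> 0"
    proof (rule Lim_null_comparison[OF _ lim0])
      show "\<forall>\<^sub>F n in sequentially. norm (qv_n (dyadic n) x t - t) \<le> (2 + 6 * real n) / 2^n"
        using bound t by auto
    qed
    then show ?thesis by (rule LIM_zero_cancel)
  qed
  have conv': "(\<lambda>n. qv_n (dyadic (Suc n)) x t) \<longlonglongrightarrow> t" if t: "t \<in> {0..1}" for t
    using LIMSEQ_Suc[OF conv[OF t]] .
  have "admits_cqv (\<lambda>n. dyadic (Suc n)) x"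
    unfolding admits_cqv_def
  proof
    show "\<forall>t\<in>{0..1}. convergent (\<lambda>n. qv_n (dyadic (Suc n)) x t)"
      using conv' convergentI by blast
    have "continuous_on {0..1} (\<lambda>t::real. t)" by (rule continuous_on_id)
    moreover have "\<And>t. t \<in> {0..1} \<Longrightarrow> lim (\<lambda>n. qv_n (dyadic (Suc n)) x t) = t"
      using conv' by (auto intro: limI)
    ultimately show "continuous_on {0..1} (\<lambda>t. lim (\<lambda>n. qv_n (dyadic (Suc n)) x t))"
      using continuous_on_cong by (metis (no_types, lifting))
  qed
  then show ?thesis using conv' by blast
qed

end
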